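(* Fix a positive integer $l$. Let $\sigma$ be a random permutation uniformly distributed on the symmetric group $S_N$, and let $\tau$ be a random permutation uniformly distributed on the alternating group $A_N$. Then, as $N\to\infty$, $$\mathrm{Ex}\big[C_\tau^{\underline{l}}\big] = \mathrm{Ex}\big[C_\sigma^{\underline{l}}\big] + O\left(\frac{(\log N)^{l-1}}{N}\right).$$
   Context: For a permutation $\pi$ of $\{1,\ldots,N\}$, $C_\pi$ denotes the number of cycles of $\pi$; $\mathrm{Ex}$ denotes expectation. For a real number $x$, $x^{\underline{l}}=x(x-1)\cdots(x-l+1)$ denotes the $l$-th falling power. *)

theory Defs
  imports "HOL-Analysis.Analysis" "HOL-Combinatorics.Combinatorics" "HOL-Library.Landau_Symbols"
begin

definition falling_pow :: "real \<Rightarrow> nat \<Rightarrow> real" where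
  "falling_pow x l = (\<Prod>i<l. x - real i)"

definition num_cycles :: "nat \<Rightarrow> (nat \<Rightarrow> nat) \<Rightarrow> nat" where
  "num_cycles N p = card ((\<lambda>x. orbit p x) ` {1..N})"

definition sym_group :: "nat \<Rightarrow> (nat \<Rightarrow> nat) set" where
  "sym_group N = {p. p permutes {1..N}}"

definition alt_group :: "nat \<Rightarrow> (nat \<Rightarrow> nat) set" where
  "alt_group N = {p. p permutes {1..N} \<and> evenperm p}"

definition uniform_ex :: "'a set \<Rightarrow> ('a \<Rightarrow> real) \<Rightarrow> real" where
  "uniform_ex S f = (\<Sum>x\<in>S. f x) / real (card S)"

end

theory Submission
  imports Defs
begin

lemma card_image_eqrel:
  fixes f g :: "'a \<Rightarrow> 'b"
  assumes "finite A" "\<And>x y. x \<in> A \<Longrightarrow> y \<in> A \<Longrightarrow> (f x = f y \<longleftrightarrow> g x = g y)"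
  shows "card (f ` A) = card (g ` A)"
proof -
  have *: "card (g ` A) \<le> card (f ` A)" if "finite A" "\<And>x y. x \<in> A \<Longrightarrow> y \<in> A \<Longrightarrow> (f x = f y \<longleftrightarrow> g x = g y)"
    for f g :: "'a \<Rightarrow> 'b"
  proof -
    have "g ` A = (\<lambda>S. g (inv_into A f S)) ` (f ` A)"
    proof (intro equalityI subsetI)
      fix y assume "y \<in> g ` A"
      then obtain x where x: "x \<in> A" "y = g x" by auto
      have "inv_into A f (f x) \<in> A" "f (inv_into A f (f x)) = f x"
        using x by (auto intro: inv_into_into f_inv_into_f)
      then have "g (inv_into A f (f x)) = g x" using that(2) x by blast
      then show "y \<in> (\<lambda>S. g (inv_into A f S)) ` (f ` A)" using x by force
    next
      fix y assume "y \<in> (\<lambda>S. g (inv_into A f S)) ` (f ` A)"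
      then obtain x where "x \<in> A" "y = g (inv_into A f (f x))" by auto
      then show "y \<in> g ` A" by (auto intro: inv_into_into)
    qed
    then show ?thesis using that(1) by (metis card_image_le finite_imageI)
  qed
  show ?thesis using *[of f g] *[of g f] assms by (meson order_antisym)
qed

lemma orbit_eq_iff:
  assumes "permutation f"
  shows "orbit f x = orbit f y \<longleftrightarrow> y \<in> orbit f x"
proof
  assume "orbit f x = orbit f y" then show "y \<in> orbit f x"
    using permutation_self_in_orbit[OF assms] by blast
next
  assume h: "y \<in> orbit f x"
  have "x \<in> orbit f y" using orbit_swap[OF permutation_self_in_orbit[OF assms] h] .
  then show "orbit f x = orbit f y" using h by (auto intro: orbit_trans)
qed

lemma nc_fix:
  assumes p: "p permutes {1..N}"
  shows "num_cycles (Suc N) p = Suc (num_cycles N p)"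
proof -
  have perm: "permutation p" using p by (meson finite_atLeastAtMost permutes_imp_permutation)
  have pn: "p (Suc N) = Suc N" using p by (simp add: permutes_not_in)
  have o: "orbit p (Suc N) = {Suc N}" using pn by (simp add: orbit_eq_singleton_iff)
  have "{Suc N} \<notin> orbit p ` {1..N}"
  proof
    assume "{Suc N} \<in> orbit p ` {1..N}"
    then obtain x where "x \<in> {1..N}" "orbit p x = {Suc N}" by auto
    then show False using permutation_self_in_orbit[OF perm, of x] by auto
  qed
  moreover have "{1..Suc N} = insert (Suc N) {1..N}" by auto
  ultimately show ?thesis unfolding num_cycles_def using o by simp
qed

lemma nc_swap:
  assumes p: "p permutes {1..N}" and b: "b \<in> {1..N}"
  shows "num_cycles (Suc N) (Transposition.transpose (Suc N) b \<circ> p) = num_cycles N p"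
proof -
  define n where "n = Suc N"
  define q where "q = Transposition.transpose n b \<circ> p"
  define a where "a = inv p b"
  have perm: "permutation p" using p by (meson finite_atLeastAtMost permutes_imp_permutation)
  have pn: "p n = n" using p by (simp add: permutes_not_in n_def)
  have pa: "p a = b" unfolding a_def using p by (simp add: permutes_inverses)
  have aN: "a \<in> {1..N}" using pa b p by (metis permutes_in_image)
  have qa: "q a = n" by (simp add: q_def pa)
  have qn: "q n = b" using pn by (simp add: q_def)
  have qz: "q z = p z" if "z \<noteq> a" "z \<noteq> n" for z
  proof -
    have "p z \<noteq> b" using that pa p by (metis permutes_inverses(2))
    moreover have "p z \<noteq> n" using that pn p by (metis permutes_inverses(2))
    ultimately show ?thesis by (simp add: q_def Transposition.transpose_def)
  qed
  have qperm: "q permutes {1..n}"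
    unfolding q_def
    by (rule permutes_compose) (use p b in \<open>auto simp: n_def intro: permutes_subset permutes_swap_id\<close>)
  have permq: "permutation q" using qperm by (meson finite_atLeastAtMost permutes_imp_permutation)
  have sub: "orbit p x \<subseteq> {1..N}" if "x \<in> {1..N}" for x
    using p that by (meson permutes_orbit_subset)
  have A: "(z \<noteq> n \<longrightarrow> z \<in> orbit p x) \<and> (z = n \<longrightarrow> a \<in> orbit p x)"
    if "z \<in> orbit q x" "x \<in> {1..N}" for z x
    using that(1)
  proof induction
    case base
    show ?case
    proof (cases "x = a")
      case True then show ?thesis using qa permutation_self_in_orbit[OF perm] by auto
    next
      case False
      then have "x \<noteq> n" using that(2) n_def by auto
      then have "q x = p x" using False qz by auto
      moreover have "p x \<in> {1..N}" using permutes_in_image[OF p] that(2) by blast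
      ultimately show ?thesis by (auto simp: n_def intro: orbit.base)
    qed
  next
    case (step z)
    show ?case
    proof (cases "z = n")
      case True
      then have "a \<in> orbit p x" using step by blast
      then have "p a \<in> orbit p x" by (rule orbit.step)
      moreover have "b \<noteq> n" using b n_def by auto
      ultimately show ?thesis using True qn pa by auto
    next
      case zn: False
      show ?thesis
      proof (cases "z = a")
        case True then show ?thesis using step qa zn by auto
      next
        case False
        have "z \<in> {1..N}" using step zn sub[OF that(2)] by auto
        then have "p z \<in> {1..N}" using permutes_in_image[OF p] by blast
        then show ?thesis using step zn False qz by (auto simp: n_def intro: orbit.step)
      qed
    qed
  qed
  have B: "z \<in> orbit q x" if "z \<in> orbit p x" "x \<in> {1..N}" for z x
    using that(1)
  proof induction
    case base
    show ?case
    proof (cases "x = a")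
      case True
      have "n \<in> orbit q x" using True qa by (metis orbit.base)
      then have "q n \<in> orbit q x" by (rule orbit.step)
      then show ?thesis using True qn pa by simp
    next
      case False
      then have "x \<noteq> n" using that(2) n_def by auto
      then show ?thesis using False qz by (metis orbit.base)
    qed
  next
    case (step z)
    show ?case
    proof (cases "z = a")
      case True
      have "n \<in> orbit q x" using True qa step by (metis orbit.step)
      then have "q n \<in> orbit q x" by (rule orbit.step)
      then show ?thesis using True qn pa by simp
    next
      case False
      show ?thesis
      proof (cases "z = n")
        case True then show ?thesis using step pn by simp
      next
        case False
        then show ?thesis using step \<open>z \<noteq> a\<close> qz by (metis orbit.step)
      qed
    qed
  qed
  have eqv: "orbit q x = orbit q y \<longleftrightarrow> orbit p x = orbit p y" if "x \<in> {1..N}" "y \<in> {1..N}" for x y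
  proof -
    have "y \<noteq> n" using that n_def by auto
    then have "y \<in> orbit q x \<longleftrightarrow> y \<in> orbit p x" using A[of y x] B[of y x] that by blast
    then show ?thesis using orbit_eq_iff[OF perm] orbit_eq_iff[OF permq] by simp
  qed
  have "orbit q n = orbit q a"
    using orbit_eq_iff[OF permq] qa by (metis orbit.base)
  then have "orbit q ` {1..n} = orbit q ` {1..N}"
    using aN by (auto simp: n_def image_iff atLeastAtMostSuc_conv)
  then have "num_cycles n q = card (orbit q ` {1..N})" by (simp add: num_cycles_def)
  also have "\<dots> = num_cycles N p" unfolding num_cycles_def
    by (rule card_image_eqrel) (use eqv in auto)
  finally show ?thesis by (simp add: n_def q_def)
qed

definition sg :: "(nat \<Rightarrow> nat) \<Rightarrow> real" where
  "sg p = (if evenperm p then 1 else -1)"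

definition DD :: "nat \<Rightarrow> (nat \<Rightarrow> real) \<Rightarrow> real" where
  "DD N g = (\<Sum>p\<in>sym_group N. sg p * g (num_cycles N p))"

lemma sg_swap:
  assumes p: "p permutes {1..N}" and b: "b \<in> {1..N}"
  shows "sg (Transposition.transpose (Suc N) b \<circ> p) = - sg p"
proof -
  have perm: "permutation p" using p by (meson finite_atLeastAtMost permutes_imp_permutation)
  have "evenperm (Transposition.transpose (Suc N) b \<circ> p) = (\<not> evenperm p)"
    using evenperm_comp[OF permutation_swap_id perm, of "Suc N" b] evenperm_swap[of "Suc N" b] b by auto
  then show ?thesis by (simp add: sg_def)
qed

lemma DD_Suc:
  "DD (Suc N) g = (\<Sum>p\<in>sym_group N. sg p * (g (Suc (num_cycles N p)) - real N * g (num_cycles N p)))"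
proof -
  let ?F = "\<lambda>p. sg p * g (num_cycles (Suc N) p)"
  have ins: "{1..Suc N} = insert (Suc N) {1..N}" by auto
  have "DD (Suc N) g = (\<Sum>b\<in>insert (Suc N) {1..N}. \<Sum>q\<in>{p. p permutes {1..N}}. ?F (Transposition.transpose (Suc N) b \<circ> q))"
    unfolding DD_def sym_group_def ins
    by (rule sum_over_permutations_insert) auto
  also have "\<dots> = (\<Sum>q\<in>{p. p permutes {1..N}}. ?F q) + (\<Sum>b\<in>{1..N}. \<Sum>q\<in>{p. p permutes {1..N}}. ?F (Transposition.transpose (Suc N) b \<circ> q))"
    by (subst sum.insert) auto
  also have "(\<Sum>q\<in>{p. p permutes {1..N}}. ?F q) = (\<Sum>q\<in>{p. p permutes {1..N}}. sg q * g (Suc (num_cycles N q)))"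
    by (rule sum.cong) (auto simp: nc_fix)
  also have "(\<Sum>b\<in>{1..N}. \<Sum>q\<in>{p. p permutes {1..N}}. ?F (Transposition.transpose (Suc N) b \<circ> q))
      = (\<Sum>b\<in>{1..N}. \<Sum>q\<in>{p. p permutes {1..N}}. - (sg q * g (num_cycles N q)))"
    by (intro sum.cong refl) (auto simp: nc_swap sg_swap)
  also have "\<dots> = real N * (\<Sum>q\<in>{p. p permutes {1..N}}. - (sg q * g (num_cycles N q)))"
    by simp
  finally have "DD (Suc N) g = (\<Sum>q\<in>{p. p permutes {1..N}}. sg q * g (Suc (num_cycles N q)))
     - (\<Sum>q\<in>{p. p permutes {1..N}}. real N * (sg q * g (num_cycles N q)))"
    by (simp add: sum_negf sum_distrib_left)
  then show ?thesis
    by (simp add: sym_group_def sum_subtractf[symmetric] algebra_simps)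
qed

lemma falling_pow_0[simp]: "falling_pow x 0 = 1"
  by (simp add: falling_pow_def)

lemma falling_pow_shift: "falling_pow (x + 1) (Suc l) = (x + 1) * falling_pow x l"
  unfolding falling_pow_def by (subst prod.lessThan_Suc_shift) (simp add: algebra_simps)

lemma falling_pow_Suc: "falling_pow x (Suc l) = falling_pow x l * (x - real l)"
  unfolding falling_pow_def by simp

lemma falling_pow_step:
  "falling_pow (x + 1) (Suc l) = falling_pow x (Suc l) + real (Suc l) * falling_pow x l"
  by (subst falling_pow_shift, subst falling_pow_Suc) (simp add: algebra_simps)

definition dd :: "nat \<Rightarrow> nat \<Rightarrow> real" where
  "dd N l = DD N (\<lambda>c. falling_pow (real c) l)"

lemma dd_Suc_Suc: "dd (Suc N) (Suc l) = (1 - real N) * dd N (Suc l) + real (Suc l) * dd N l"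
proof -
  have "dd (Suc N) (Suc l) = (\<Sum>p\<in>sym_group N. sg p * (falling_pow (real (num_cycles N p) + 1) (Suc l)
      - real N * falling_pow (real (num_cycles N p)) (Suc l)))"
    unfolding dd_def DD_Suc by (simp add: add.commute)
  also have "\<dots> = (\<Sum>p\<in>sym_group N. (1 - real N) * (sg p * falling_pow (real (num_cycles N p)) (Suc l))
      + real (Suc l) * (sg p * falling_pow (real (num_cycles N p)) l))"
    by (intro sum.cong refl) (simp only: falling_pow_step, simp add: algebra_simps)
  also have "\<dots> = (1 - real N) * dd N (Suc l) + real (Suc l) * dd N l"
    by (simp add: dd_def DD_def sum.distrib sum_distrib_left)
  finally show ?thesis .
qed

lemma dd_Suc_0: "dd (Suc N) 0 = (1 - real N) * dd N 0"
  unfolding dd_def DD_Suc by (simp add: DD_def sum_distrib_left algebra_simps)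

lemma dd_0: "N \<ge> 2 \<Longrightarrow> dd N 0 = 0"
proof (induction N rule: nat_induct_at_least)
  case base
  show ?case using dd_Suc_0[of 1] by (simp add: numeral_2_eq_2)
next
  case (Suc n) then show ?case by (simp add: dd_Suc_0)
qed

lemma dd_bound: "\<exists>K\<ge>0. \<forall>N\<ge>2. \<bar>dd N l\<bar> \<le> K * fact (N - 1)"
proof (induction l)
  case 0
  show ?case by (rule exI[of _ 0]) (simp add: dd_0)
next
  case (Suc m)
  then obtain K' where K': "K' \<ge> 0" "\<And>N. N \<ge> 2 \<Longrightarrow> \<bar>dd N m\<bar> \<le> K' * fact (N - 1)" by blast
  define K where "K = max \<bar>dd 2 (Suc m)\<bar> (real (Suc m) * K')"
  have K0: "K \<ge> 0" and K1: "\<bar>dd 2 (Suc m)\<bar> \<le> K" and K2: "real (Suc m) * K' \<le> K"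
    unfolding K_def by auto
  have "\<bar>dd N (Suc m)\<bar> \<le> K * fact (N - 1)" if "N \<ge> 2" for N
    using that
  proof (induction N rule: nat_induct_at_least)
    case base
    show ?case using K1 by simp
  next
    case (Suc n)
    have f: "fact (Suc n - 1) = real n * fact (n - 1)"
      using Suc.hyps by (simp add: fact_reduce[of n])
    have "\<bar>dd (Suc n) (Suc m)\<bar> \<le> \<bar>1 - real n\<bar> * \<bar>dd n (Suc m)\<bar> + real (Suc m) * \<bar>dd n m\<bar>"
      unfolding dd_Suc_Suc by (metis abs_mult abs_of_nat abs_triangle_ineq)
    also have "\<dots> \<le> (real n - 1) * (K * fact (n - 1)) + real (Suc m) * (K' * fact (n - 1))"
    proof (rule add_mono)
      show "\<bar>1 - real n\<bar> * \<bar>dd n (Suc m)\<bar> \<le> (real n - 1) * (K * fact (n - 1))"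
        using Suc.IH Suc.hyps by (intro mult_mono) auto
      show "real (Suc m) * \<bar>dd n m\<bar> \<le> real (Suc m) * (K' * fact (n - 1))"
        using K'(2)[of n] Suc.hyps by (intro mult_left_mono) auto
    qed
    also have "\<dots> = (real n - 1) * K * fact (n - 1) + (real (Suc m) * K') * fact (n - 1)"
      by (simp add: algebra_simps)
    also have "\<dots> \<le> (real n - 1) * K * fact (n - 1) + K * fact (n - 1)"
      using K2 by (intro add_left_mono mult_right_mono) auto
    also have "\<dots> = K * fact (Suc n - 1)"
      using f by (simp add: algebra_simps)
    finally show ?case .
  qed
  then show ?case using K0 by blast
qed

lemma sum_sg_split:
  fixes h :: "(nat \<Rightarrow> nat) \<Rightarrow> real"
  shows "(\<Sum>p\<in>sym_group N. sg p * h p) = (\<Sum>p\<in>alt_group N. h p) - (\<Sum>p\<in>sym_group N - alt_group N. h p)"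
proof -
  have fin: "finite (sym_group N)" unfolding sym_group_def by (simp add: finite_permutations)
  have sub: "alt_group N \<subseteq> sym_group N" unfolding alt_group_def sym_group_def by auto
  have "(\<Sum>p\<in>sym_group N. sg p * h p) = (\<Sum>p\<in>sym_group N - alt_group N. sg p * h p) + (\<Sum>p\<in>alt_group N. sg p * h p)"
    by (rule sum.subset_diff[OF sub fin])
  also have "(\<Sum>p\<in>sym_group N - alt_group N. sg p * h p) = (\<Sum>p\<in>sym_group N - alt_group N. - h p)"
    by (rule sum.cong) (auto simp: sg_def alt_group_def sym_group_def)
  also have "(\<Sum>p\<in>alt_group N. sg p * h p) = (\<Sum>p\<in>alt_group N. h p)"
    by (rule sum.cong) (auto simp: sg_def alt_group_def)
  finally show ?thesis by (simp add: sum_negf)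
qed

lemma diff_eq:
  fixes h :: "(nat \<Rightarrow> nat) \<Rightarrow> real"
  assumes N: "N \<ge> 2"
  shows "uniform_ex (alt_group N) h - uniform_ex (sym_group N) h = (\<Sum>p\<in>sym_group N. sg p * h p) / fact N"
proof -
  have fin: "finite (sym_group N)" unfolding sym_group_def by (simp add: finite_permutations)
  have sub: "alt_group N \<subseteq> sym_group N" unfolding alt_group_def sym_group_def by auto
  have cs: "card (sym_group N) = fact N" unfolding sym_group_def by (rule card_permutations) auto
  have "dd N 0 = 0" using dd_0 N by simp
  then have "(\<Sum>p\<in>sym_group N. sg p * 1) = 0" by (simp add: dd_def DD_def)
  then have "(\<Sum>p\<in>alt_group N. (1::real)) - (\<Sum>p\<in>sym_group N - alt_group N. 1) = 0"
    using sum_sg_split[of "\<lambda>_. 1" N] by simp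
  then have c1: "real (card (alt_group N)) = real (card (sym_group N - alt_group N))" by simp
  have "card (sym_group N) = card (sym_group N - alt_group N) + card (alt_group N)"
    using card_Diff_subset[OF finite_subset[OF sub fin] sub] card_mono[OF fin sub] by simp
  then have "real (card (sym_group N)) = real (card (sym_group N - alt_group N)) + real (card (alt_group N))"
    by simp
  moreover have "real (card (sym_group N)) = fact N" using cs by simp
  ultimately have ca: "real (card (alt_group N)) = fact N / 2" using c1 by linarith
  define A where "A = (\<Sum>p\<in>alt_group N. h p)"
  define B where "B = (\<Sum>p\<in>sym_group N - alt_group N. h p)"
  have "uniform_ex (sym_group N) h = (B + A) / fact N"
    unfolding uniform_ex_def cs A_def B_def using sum.subset_diff[OF sub fin, of h] by simp
  moreover have "uniform_ex (alt_group N) h = 2 * A / fact N"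
    unfolding uniform_ex_def ca A_def by simp
  moreover have "2 * A / fact N - (B + A) / fact N = (A - B) / (fact N :: real)"
    by (simp add: diff_divide_distrib[symmetric])
  ultimately show ?thesis unfolding sum_sg_split A_def B_def by simp
qed

theorem theorem3p2:
  fixes l :: nat
  assumes "l > 0"
  shows "(\<lambda>N. uniform_ex (alt_group N) (\<lambda>p. falling_pow (real (num_cycles N p)) l)
              - uniform_ex (sym_group N) (\<lambda>p. falling_pow (real (num_cycles N p)) l))
         \<in> O(\<lambda>N. ln (real N) ^ (l - 1) / real N)"
proof -
  obtain K where K: "K \<ge> 0" "\<And>N. N \<ge> 2 \<Longrightarrow> \<bar>dd N l\<bar> \<le> K * fact (N - 1)"
    using dd_bound[of l] by blast
  have ev: "norm (uniform_ex (alt_group N) (\<lambda>p. falling_pow (real (num_cycles N p)) l)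
              - uniform_ex (sym_group N) (\<lambda>p. falling_pow (real (num_cycles N p)) l))
        \<le> K * norm (ln (real N) ^ (l - 1) / real N)" if N: "N \<ge> 3" for N
  proof -
    have eq: "uniform_ex (alt_group N) (\<lambda>p. falling_pow (real (num_cycles N p)) l)
              - uniform_ex (sym_group N) (\<lambda>p. falling_pow (real (num_cycles N p)) l) = dd N l / fact N"
      using diff_eq[of N "\<lambda>p. falling_pow (real (num_cycles N p)) l"] N by (simp add: dd_def DD_def)
    have fN: "(fact N :: real) = real N * fact (N - 1)"
      using N by (simp add: fact_reduce[of N])
    have "\<bar>dd N l / fact N\<bar> = \<bar>dd N l\<bar> / fact N" by simp
    also have "\<dots> \<le> K * fact (N - 1) / fact N"
      using K(2)[of N] N by (intro divide_right_mono) auto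
    also have "\<dots> = K / real N" using fN N by simp
    also have "\<dots> \<le> K * (ln (real N) ^ (l - 1) / real N)"
    proof -
      have "exp 1 \<le> (3::real)" using exp_le by simp
      also have "\<dots> \<le> real N" using N by simp
      finally have "1 \<le> ln (real N)" using N by (metis exp_gt_zero ln_exp ln_le_cancel_iff order_less_le_trans)
      then have "1 \<le> ln (real N) ^ (l - 1)" by (simp add: one_le_power)
      then have "1 / real N \<le> ln (real N) ^ (l - 1) / real N" using N by (intro divide_right_mono) auto
      then show ?thesis using K(1) by (metis mult_left_mono times_divide_eq_right mult_1_right)
    qed
    also have "\<dots> = K * norm (ln (real N) ^ (l - 1) / real N)"
    proof -
      have "1 \<le> ln (real N)"
      proof -
        have "exp 1 \<le> (3::real)" using exp_le by simp
        also have "\<dots> \<le> real N" using N by simp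
        finally show ?thesis using N by (metis exp_gt_zero ln_exp ln_le_cancel_iff order_less_le_trans)
      qed
      then show ?thesis by simp
    qed
    finally show ?thesis using eq by simp
  qed
  show ?thesis
    by (rule bigoI[where c = K]) (use ev in \<open>auto simp: eventually_at_top_linorder intro: exI[of _ 3]\<close>)
qed

end
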